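(* Let $(X,d)$ be a metric space with $|X|\ge 2$, let $\tilde x=(x_n)$ be a sequence of points of $X$, and let $\tilde x'=(x_{n(k)})$ be an infinite subsequence of $\tilde x$ such that $\limsup_{n\to\infty}\frac{|K_{\tilde x'}(n)|}{n}=0$. Then there exist a sequence $\tilde y$ of points of $X$ and a subsequence $\tilde y'$ of $\tilde y$ such that $\tilde x$ and $\tilde y$ are statistically equivalent, $K_{\tilde y'}=K_{\tilde x'}$, and $\tilde y'$ is not $d$-statistically convergent.
   Context: For a subsequence $\tilde z'=(z_{n(k)})$ of a sequence $(z_n)$ (with $(n(k))$ strictly increasing), $K_{\tilde z'}=\{n(k):k\in\mathbb N\}$ and $K_{\tilde z'}(n)=\{m\in K_{\tilde z'}: m\le n\}$. A set $M\subseteq\mathbb N$ is statistical dense if $\lim_{n\to\infty}|\{m\in M:m\le n\}|/n=1$. Sequences $(x_n),(y_n)$ are statistically equivalent if $x_n=y_n$ for all $n$ in some statistical dense set $M\subseteq\mathbb N$. A sequence $(z_k)$ is $d$-statistically convergent if there is $a\in X$ with $\lim_{n\to\infty}\frac1n|\{k\le n: d(z_k,a)\ge\epsilon\}|=0$ for every $\epsilon>0$; a subsequence $(y_{n(k)})_k$ is regarded as the sequence $k\mapsto y_{n(k)}$. *)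

theory Defs
  imports "HOL-Analysis.Analysis"
begin

text \<open>The index set of a subsequence given by a strictly increasing index map r.\<close>
definition K_sub :: "(nat \<Rightarrow> nat) \<Rightarrow> nat set" where
  "K_sub r = range r"

definition count_upto :: "nat set \<Rightarrow> nat \<Rightarrow> nat" where
  "count_upto M n = card {m \<in> M. m \<le> n}"

definition stat_dense :: "nat set \<Rightarrow> bool" where
  "stat_dense M \<longleftrightarrow> (\<lambda>n. real (count_upto M n) / real n) \<longlonglongrightarrow> 1"

definition stat_equivalent :: "(nat \<Rightarrow> 'a) \<Rightarrow> (nat \<Rightarrow> 'a) \<Rightarrow> bool" where
  "stat_equivalent x y \<longleftrightarrow> (\<exists>M. stat_dense M \<and> (\<forall>n\<in>M. x n = y n))"

text \<open>d-statistical convergence; the sequence is indexed from 0, so the first n terms are k < n.\<close>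
definition d_stat_convergent :: "(nat \<Rightarrow> 'a::metric_space) \<Rightarrow> bool" where
  "d_stat_convergent z \<longleftrightarrow> (\<exists>a. \<forall>\<epsilon>>0.
     (\<lambda>n. real (card {k. k < n \<and> dist (z k) a \<ge> \<epsilon>}) / real n) \<longlonglongrightarrow> 0)"

end

theory Submission
  imports Defs
begin

lemma card_even_odd:
  "card {k. k < n \<and> even k} = (n+1) div 2 \<and> card {k. k < n \<and> odd k} = n div 2"
proof (induction n)
  case 0 then show ?case by simp
next
  case (Suc n)
  have e: "{k. k < Suc n \<and> even k} = (if even n then insert n {k. k < n \<and> even k} else {k. k < n \<and> even k})"
    by (auto simp: less_Suc_eq)
  have o: "{k. k < Suc n \<and> odd k} = (if odd n then insert n {k. k < n \<and> odd k} else {k. k < n \<and> odd k})"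
    by (auto simp: less_Suc_eq)
  show ?case using Suc by (auto simp: e o card_insert_if elim!: evenE oddE)
qed

lemma alt_not_conv:
  fixes a b :: "'a::metric_space"
  assumes "a \<noteq> b"
  shows "\<not> d_stat_convergent (\<lambda>k. if even k then a else b)"
proof
  assume "d_stat_convergent (\<lambda>k. if even k then a else b)"
  then obtain c where c: "\<And>e. e > 0 \<Longrightarrow> (\<lambda>n. real (card {k. k < n \<and> dist (if even k then a else b) c \<ge> e}) / real n) \<longlonglongrightarrow> 0"
    unfolding d_stat_convergent_def by blast
  define e where "e = dist a b / 2"
  have e0: "e > 0" using assms by (simp add: e_def)
  have tri: "dist a c \<ge> e \<or> dist b c \<ge> e"
    using dist_triangle3[of a b c] dist_commute[of c a] dist_commute[of c b] unfolding e_def by linarith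
  have low: "\<And>n. n \<ge> 2 \<Longrightarrow> real (card {k. k < n \<and> dist (if even k then a else b) c \<ge> e}) / real n \<ge> 1/4"
  proof -
    fix n :: nat assume n: "n \<ge> 2"
    have "card {k. k < n \<and> dist (if even k then a else b) c \<ge> e} * 4 \<ge> n"
    proof (cases "dist a c \<ge> e")
      case True
      have "{k. k < n \<and> even k} \<subseteq> {k. k < n \<and> dist (if even k then a else b) c \<ge> e}"
        using True by auto
      then have "card {k. k < n \<and> even k} \<le> card {k. k < n \<and> dist (if even k then a else b) c \<ge> e}"
        by (intro card_mono) auto
      then show ?thesis using card_even_odd[of n] by linarith
    next
      case False
      then have B: "dist b c \<ge> e" using tri by auto
      have "{k. k < n \<and> odd k} \<subseteq> {k. k < n \<and> dist (if even k then a else b) c \<ge> e}"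
        using B by auto
      then have "card {k. k < n \<and> odd k} \<le> card {k. k < n \<and> dist (if even k then a else b) c \<ge> e}"
        by (intro card_mono) auto
      then show ?thesis using card_even_odd[of n] n by linarith
    qed
    then have "real n \<le> real (card {k. k < n \<and> dist (if even k then a else b) c \<ge> e}) * 4"
      by (metis of_nat_le_iff of_nat_mult of_nat_numeral)
    then show "real (card {k. k < n \<and> dist (if even k then a else b) c \<ge> e}) / real n \<ge> 1/4"
      using n by (simp add: field_simps)
  qed
  have "eventually (\<lambda>n. real (card {k. k < n \<and> dist (if even k then a else b) c \<ge> e}) / real n < 1/4) sequentially"
    using c[OF e0] by (rule order_tendstoD) simp
  moreover have "eventually (\<lambda>n. n \<ge> (2::nat)) sequentially" by (rule eventually_ge_at_top)
  ultimately have "eventually (\<lambda>n. False) sequentially"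
    by eventually_elim (use low in force)
  then show False by simp
qed

lemma tends0:
  assumes "limsup (\<lambda>n. ereal (f n)) = 0" and "\<And>n. f n \<ge> (0::real)"
  shows "f \<longlonglongrightarrow> 0"
proof (rule limsup_le_liminf_real)
  show "limsup f \<le> ereal 0" using assms by simp
  show "ereal 0 \<le> liminf f" using assms by (intro Liminf_bounded) auto
qed

theorem lemma2:
  fixes x :: "nat \<Rightarrow> 'a::metric_space" and r :: "nat \<Rightarrow> nat"
  assumes two: "\<exists>a b::'a. a \<noteq> b"
    and sub: "strict_mono r"
    and zero: "limsup (\<lambda>n. ereal (real (count_upto (K_sub r) n) / real n)) = 0"
  shows "\<exists>(y :: nat \<Rightarrow> 'a) s. strict_mono s \<and> stat_equivalent x y
           \<and> K_sub s = K_sub r \<and> \<not> d_stat_convergent (\<lambda>k. y (s k))"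
proof -
  obtain a b :: 'a where ab: "a \<noteq> b" using two by blast
  have inj: "inj r" using sub by (rule strict_mono_imp_inj_on)
  define y where "y n = (if n \<in> range r then (if even (inv r n) then a else b) else x n)" for n
  have ys: "(\<lambda>k. y (r k)) = (\<lambda>k. if even k then a else b)"
    using inj by (auto simp: y_def)
  have t0: "(\<lambda>n. real (count_upto (K_sub r) n) / real n) \<longlonglongrightarrow> 0"
    using zero by (rule tends0) simp
  define M where "M = - range r"
  have cnt: "count_upto M n + count_upto (K_sub r) n = n + 1" for n
  proof -
    have "{m \<in> M. m \<le> n} \<union> {m \<in> K_sub r. m \<le> n} = {..n}"
      "{m \<in> M. m \<le> n} \<inter> {m \<in> K_sub r. m \<le> n} = {}"
      by (auto simp: M_def K_sub_def)
    then have "card {m \<in> M. m \<le> n} + card {m \<in> K_sub r. m \<le> n} = card {..n}"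
      by (metis (no_types, lifting) card_Un_disjoint finite_Un finite_atMost)
    then show ?thesis by (simp add: count_upto_def)
  qed
  have "(\<lambda>n. (1 + 1 / real n) - real (count_upto (K_sub r) n) / real n) \<longlonglongrightarrow> (1 + 0) - 0"
    by (intro tendsto_intros t0 lim_inverse_n')
  moreover have "eventually (\<lambda>n. (1 + 1 / real n) - real (count_upto (K_sub r) n) / real n
        = real (count_upto M n) / real n) sequentially"
    using eventually_gt_at_top[of 0]
  proof eventually_elim
    case (elim n)
    have "real (count_upto M n) = real n + 1 - real (count_upto (K_sub r) n)"
      using cnt[of n] by (metis add_diff_cancel_right' of_nat_1 of_nat_add)
    then show ?case using elim by (simp add: diff_divide_distrib add_divide_distrib)
  qed
  ultimately have "stat_dense M" unfolding stat_dense_def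
    by (simp add: tendsto_cong)
  moreover have "\<forall>n\<in>M. x n = y n" by (auto simp: M_def y_def)
  ultimately have "stat_equivalent x y" unfolding stat_equivalent_def by blast
  then show ?thesis using sub ys alt_not_conv[OF ab] by metis
qed

end
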